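(* Let $d\geqslant 1$ be an integer and $x$ a real number with $d+1\leqslant x/2$. Then $$\sum_{K_{d+1}-d-1<k\leqslant K_{d+1}}\Big(d^2\lfloor x/k\rfloor+\frac{2dx}{\lfloor x/k\rfloor}-x^2F(x/k)\Big)=\frac{8d^2+4d-1}{3}\sqrt{(d+1)x}+O(d^{7/2}x^{-1/2})+O(d^2),$$ where $k$ runs over integers, with absolute implied constants.
   Context: $\lfloor\cdot\rfloor$ denotes the integer part. For an integer $d\geqslant 0$ and real $x>0$, $K_d=K_d(x)=\big\lfloor \big(d+\sqrt{d^2+4dx}\,\big)/2\big\rfloor$. For real $t$, $F(t)=\sum_{n>t-1}\frac{1}{n^2(n+1)^2}$, summed over positive integers $n>t-1$. *)

theory Defs
  imports Complex_Main
begin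

definition K :: "nat \<Rightarrow> real \<Rightarrow> int" where
  "K d x = \<lfloor>(real d + sqrt ((real d)^2 + 4 * real d * x)) / 2\<rfloor>"

definition F :: "real \<Rightarrow> real" where
  "F t = (\<Sum>n. if n \<ge> 1 \<and> real n > t - 1 then 1 / ((real n)^2 * (real n + 1)^2) else 0)"

end

theory Submission
  imports Defs
begin


lemma f_step:
  fixes n :: real assumes "n \<ge> 1"
  shows "1 / (n^2 * (n+1)^2) = 1/(3*n^3) - 1/(3*(n+1)^3) - (1/(n^3*(n+1)^3))/3"
proof -
  have p: "n > 0" using assms by simp
  have d1: "3*(n^3*(n+1)^3) = (3*n*(n+1))*(n^2*(n+1)^2)"
    by (simp add: algebra_simps power2_eq_square power3_eq_cube)
  have "1/(3*n^3) - 1/(3*(n+1)^3) - (1/(n^3*(n+1)^3))/3 = ((n+1)^3 - n^3 - 1)/(3*(n^3*(n+1)^3))"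
    using p by (simp add: field_simps)
  also have "(n+1)^3 - n^3 - 1 = 3*n*(n+1)" by (simp add: algebra_simps power3_eq_cube)
  also have "3*n*(n+1)/(3*(n^3*(n+1)^3)) = 1/(n^2*(n+1)^2)"
    unfolding d1 using p by simp
  finally show ?thesis by simp
qed

lemma e_step:
  fixes n :: real assumes "n \<ge> 1"
  shows "1/(n^3*(n+1)^3) \<le> 1/n^5 - 1/(n+1)^5"
proof -
  have p: "n > 0" using assms by simp
  have "1/n^5 - 1/(n+1)^5 = ((n+1)^5 - n^5)/(n^5*(n+1)^5)" using p by (simp add: field_simps)
  moreover have "1/(n^3*(n+1)^3) = (n^2*(n+1)^2)/(n^5*(n+1)^5)" using p by (simp add: field_simps)
  moreover have "n^2*(n+1)^2 \<le> (n+1)^5 - n^5"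
  proof -
    have "(n+1)^5 - n^5 - n^2*(n+1)^2 = 4*n^4 + 8*n^3+9*n^2+5*n+1"
      by (simp add: algebra_simps power2_eq_square power3_eq_cube power4_eq_xxxx power_def)
    thus ?thesis using p by (smt (verit) mult_pos_pos zero_less_power)
  qed
  ultimately show ?thesis using p by (simp add: divide_right_mono)
qed

lemma lin_help: fixes a b c f g s e :: real
  shows "a = b - c - s/3 \<Longrightarrow> f = c - g - e/3 \<Longrightarrow> a + f = b - g - (s+e)/3"
  by (simp add: add_divide_distrib)

lemma tele:
  fixes m N :: nat assumes "m \<ge> 1" "m \<le> N"
  shows "(\<Sum>n\<in>{m..<N}. 1 / ((real n)^2 * (real n + 1)^2))
         = 1/(3*real m^3) - 1/(3*real N^3) - (\<Sum>n\<in>{m..<N}. 1/(real n^3*(real n+1)^3)) / 3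
       \<and> (\<Sum>n\<in>{m..<N}. 1/(real n^3*(real n+1)^3)) \<le> 1/real m^5 - 1/real N^5"
  using assms(2)
proof (induction N rule: dec_induct)
  case base thus ?case by simp
next
  case (step N)
  have N1: "real N \<ge> 1" using step assms by simp
  have A: "(\<Sum>n\<in>{m..<Suc N}. 1 / ((real n)^2 * (real n + 1)^2)) = 
     (\<Sum>n\<in>{m..<N}. 1 / ((real n)^2 * (real n + 1)^2)) + 1 / ((real N)^2 * (real N + 1)^2)"
    using step by simp
  have B: "(\<Sum>n\<in>{m..<Suc N}. 1/(real n^3*(real n+1)^3)) = 
     (\<Sum>n\<in>{m..<N}. 1/(real n^3*(real n+1)^3)) + 1/(real N^3*(real N+1)^3)"
    using step by simp
  have C: "real (Suc N) = real N + 1" by simp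
  show ?case unfolding A B C
  proof (intro conjI)
    show "(\<Sum>n\<in>{m..<N}. 1 / ((real n)^2 * (real n + 1)^2)) + 1 / ((real N)^2 * (real N + 1)^2) =
     1 / (3 * real m ^ 3) - 1 / (3 * (real N + 1) ^ 3) -
     ((\<Sum>n\<in>{m..<N}. 1 / (real n ^ 3 * (real n + 1) ^ 3)) + 1 / (real N ^ 3 * (real N + 1) ^ 3)) / 3"
      by (rule lin_help[OF conjunct1[OF step.IH] f_step[OF N1]])
    show "(\<Sum>n\<in>{m..<N}. 1 / (real n ^ 3 * (real n + 1) ^ 3)) + 1 / (real N ^ 3 * (real N + 1) ^ 3)
     \<le> 1 / real m ^ 5 - 1 / (real N + 1) ^ 5"
      using conjunct2[OF step.IH] e_step[OF N1] by linarith
  qed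
qed

lemma F_bounds:
  fixes t :: real assumes t1: "t \<ge> 1"
  shows "1/(3*(of_int \<lfloor>t\<rfloor>)^3) - 1/(3*(of_int \<lfloor>t\<rfloor>)^5) \<le> F t
        \<and> F t \<le> 1/(3*(of_int \<lfloor>t\<rfloor>::real)^3)"
proof -
  define m where "m = nat \<lfloor>t\<rfloor>"
  have fl1: "\<lfloor>t\<rfloor> \<ge> 1" using t1 by simp
  have rm: "real m = of_int \<lfloor>t\<rfloor>" using fl1 unfolding m_def by simp
  have m1: "m \<ge> 1" using fl1 unfolding m_def by linarith
  define f where "f = (\<lambda>n::nat. 1 / ((real n)^2 * (real n + 1)^2))"
  define g where "g = (\<lambda>n::nat. if n \<ge> 1 \<and> real n > t - 1 then 1 / ((real n)^2 * (real n + 1)^2) else 0)"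
  have Fg: "F t = suminf g" unfolding F_def g_def by simp
  have gi: "g n = (if m \<le> n then f n else 0)" for n
  proof -
    have "(n \<ge> 1 \<and> real n > t - 1) \<longleftrightarrow> m \<le> n"
    proof
      assume "n \<ge> 1 \<and> real n > t - 1"
      hence "real n + 1 > t" by simp
      hence "real n + 1 > of_int \<lfloor>t\<rfloor>" by linarith
      hence "int n + 1 > \<lfloor>t\<rfloor>" by linarith
      thus "m \<le> n" unfolding m_def by simp
    next
      assume "m \<le> n"
      hence "real n \<ge> real m" by simp
      hence "real n \<ge> of_int \<lfloor>t\<rfloor>" using rm by simp
      moreover have "of_int \<lfloor>t\<rfloor> > t - 1" by linarith
      ultimately have "real n > t - 1" by linarith
      moreover have "n \<ge> 1" using m1 \<open>m \<le> n\<close> by simp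
      ultimately show "n \<ge> 1 \<and> real n > t - 1" by simp
    qed
    thus ?thesis unfolding g_def f_def by simp
  qed
  have gnn: "g n \<ge> 0" for n unfolding g_def by simp
  have ps: "(\<Sum>n<N. g n) = (\<Sum>n\<in>{m..<N}. f n)" for N
  proof -
    have "(\<Sum>n<N. g n) = (\<Sum>n<N. if n \<in> {n. m \<le> n} then f n else 0)" using gi by simp
    also have "\<dots> = (\<Sum>n\<in>{..<N} \<inter> {n. m \<le> n}. f n)" by (simp add: sum.inter_restrict)
    also have "{..<N} \<inter> {n. m \<le> n} = {m..<N}" by auto
    finally show ?thesis .
  qed
  have enn: "(\<Sum>n\<in>{m..<N}. 1/(real n^3*(real n+1)^3)) \<ge> 0" for N
    by (intro sum_nonneg) simp
  have up: "(\<Sum>n<N. g n) \<le> 1/(3*real m^3)" for N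
  proof (cases "m \<le> N")
    case True
    have T: "(\<Sum>n\<in>{m..<N}. f n) = 1/(3*real m^3) - 1/(3*real N^3) - (\<Sum>n\<in>{m..<N}. 1/(real n^3*(real n+1)^3)) / 3"
      using tele[OF m1 True] unfolding f_def by auto
    have "1/(3*real N^3) \<ge> 0" by simp
    thus ?thesis unfolding ps using T enn[of N] by linarith
  next
    case False
    hence "{m..<N} = {}" by auto
    thus ?thesis unfolding ps by simp
  qed
  have summ: "summable g" by (rule summableI_nonneg_bounded[OF gnn up])
  have Fup: "F t \<le> 1/(3*real m^3)" unfolding Fg by (rule suminf_le_const[OF summ up])
  define L where "L = 1/(3*real m^3) - 1/(3*real m^5)"
  have low: "L - 1/(3*real N^3) \<le> F t" if "m \<le> N" for N
  proof -
    have "(\<Sum>n<N. g n) \<le> F t" unfolding Fg by (rule sum_le_suminf[OF summ]) (auto simp: gnn)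
    moreover have "L - 1/(3*real N^3) \<le> (\<Sum>n<N. g n)"
    proof -
      have T: "(\<Sum>n\<in>{m..<N}. f n) = 1/(3*real m^3) - 1/(3*real N^3) - (\<Sum>n\<in>{m..<N}. 1/(real n^3*(real n+1)^3)) / 3"
        "(\<Sum>n\<in>{m..<N}. 1/(real n^3*(real n+1)^3)) \<le> 1/real m^5 - 1/real N^5"
        using tele[OF m1 that] unfolding f_def by auto
      have "1/(3*real m^5) = (1/real m^5)/3" by simp
      moreover have "1/real N^5 \<ge> 0" by simp
      ultimately show ?thesis unfolding ps L_def using T by linarith
    qed
    ultimately show ?thesis by linarith
  qed
  have Flow: "L \<le> F t"
  proof (rule ccontr)
    assume "\<not> L \<le> F t"
    hence pos: "L - F t > 0" by simp
    obtain N0 :: nat where N0: "1/(L - F t) < real N0" using reals_Archimedean2 by blast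
    define N where "N = max N0 m"
    have mN: "m \<le> N" unfolding N_def by simp
    have N1: "real N \<ge> 1" using m1 mN by simp
    have "1/(L - F t) < real N" using N0 unfolding N_def by simp
    hence "1 < (L - F t) * real N" using pos by (simp add: divide_less_eq mult.commute)
    hence lt: "1/real N < L - F t" using N1 by (simp add: divide_less_eq)
    have "real N * 1 \<le> real N * (3 * real N^2)" using N1
    proof (intro mult_left_mono)
      have "1 \<le> real N^2" using N1 by (simp add: one_le_power)
      thus "1 \<le> 3 * real N^2" by linarith
    qed simp
    hence "real N \<le> 3 * real N^3" by (simp add: power3_eq_cube power2_eq_square)
    hence "1/(3*real N^3) \<le> 1/real N" using N1 by (intro divide_left_mono) auto
    with lt low[OF mN] show False by linarith
  qed
  show ?thesis using Flow Fup unfolding L_def rm by simp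
qed



lemma ident1:
  fixes x k m d :: real
  assumes "x > 0" "k > 0" "m > 0"
  shows "d^2*m + 2*d*x/m - x^2/(3*m^3) - (d^2*x/k + 2*d*k - k^3/(3*x))
       = (x/k - m) * (2*d*(k^2/x)*((x/k)/m) - d^2 - (k^2/x)^2*(((x/k)/m)^3+((x/k)/m)^2+(x/k)/m)/3)"
  using assms by (simp add: field_simps) algebra

lemma ident2:
  fixes x k s d D :: real
  assumes "x > 0" "k > 0" "s > 0" "D > 0" "s^2 = D*x" "d = D - 1"
  shows "d^2*x/k + 2*d*k - k^3/(3*x) - s*(d^2/D + 2*d - D/3)
       = -(k-s)/D + (k-s)^2*(d^2*x/(k*s^2) - (k+2*s)/(3*x))"
proof -
  have xD: "x = s^2/D" using assms by (simp add: field_simps)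
  show ?thesis unfolding xD assms(6) using assms(2,3,4)
    by (simp add: field_simps) algebra
qed

lemma absB: fixes u v w a b c :: real
  assumes "\<bar>u\<bar> \<le> a" "\<bar>v\<bar> \<le> b" "\<bar>w\<bar> \<le> c"
  shows "\<bar>u - (v + 3*w)/3\<bar> \<le> a + b/3 + c"
proof -
  have e: "u - (v + 3*w)/3 = u - v/3 - w" by (simp add: field_simps)
  show ?thesis unfolding e using assms by (auto simp: abs_le_iff)
qed

lemma absB1: fixes B c :: real
  shows "\<bar>B + 1\<bar> \<le> c \<Longrightarrow> \<bar>B\<bar> \<le> 1 + c"
  by (auto simp: abs_le_iff)

lemma absC: fixes u v a b c :: real
  shows "0 \<le> u \<Longrightarrow> u \<le> a \<Longrightarrow> 0 \<le> v \<Longrightarrow> v \<le> b \<Longrightarrow> a \<le> c \<Longrightarrow> b \<le> c \<Longrightarrow> \<bar>u - v\<bar> \<le> c"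
  by (auto simp: abs_le_iff)

lemma absD: fixes u v a b :: real
  shows "\<bar>u\<bar> \<le> a \<Longrightarrow> \<bar>v\<bar> \<le> b \<Longrightarrow> \<bar>-u + v\<bar> \<le> a + b"
  by (auto simp: abs_le_iff)

lemma absE: fixes T X Y G H Gs a b c :: real
  shows "T - X - Y = P \<Longrightarrow> \<bar>P\<bar> \<le> a \<Longrightarrow> \<bar>Z - X\<bar> \<le> b \<Longrightarrow> \<bar>Y - Gs\<bar> \<le> c
    \<Longrightarrow> \<bar>T - Z - Gs\<bar> \<le> a + b + c"
  by (auto simp: abs_le_iff)

lemma term_bound:
  fixes D d x s k m Fv :: real
  assumes D2: "D \<ge> 2" and dD: "d = D - 1" and xp: "x > 0" and sp: "s > 0" and ss: "s^2 = D*x"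
    and k4: "s/4 \<le> k" and k2: "k \<le> 2*s" and ks: "\<bar>k - s\<bar> \<le> 3*D"
    and m1: "m \<ge> 1" and mt1: "m \<le> x/k" and mt2: "x/k < m+1"
    and Fl: "1/(3*m^3) - 1/(3*m^5) \<le> Fv" and Fu: "Fv \<le> 1/(3*m^3)"
  shows "\<bar>d^2*m + 2*d*x/m - x^2*Fv - s*(d^2/D + 2*d - D/3)\<bar> \<le> 4 + 720*(D^2*(D/s))"
proof -
  have kp: "k > 0" using k4 sp by linarith
  have mp: "m > 0" using m1 by linarith
  have Dp: "D > 0" using D2 by linarith
  define q where "q = D/s"
  have qp: "q > 0" unfolding q_def using Dp sp by simp
  define t where "t = x/k"
  define \<theta> where "\<theta> = t - m"
  define r where "r = t/m"
  define \<rho> where "\<rho> = r - 1"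
  define a where "a = k^2/x"
  define B where "B = 2*d*a*r - d^2 - a^2*(r^3+r^2+r)/3"
  have xs: "x = s^2/D" using ss Dp by (simp add: field_simps)
  have sx: "s/x = q" unfolding q_def xs using sp Dp by (simp add: field_simps power2_eq_square)
  have th0: "0 \<le> \<theta>" "\<theta> < 1" unfolding \<theta>_def t_def using mt1 mt2 by auto
  have "x/(2*s) \<le> t" unfolding t_def using k2 kp xp by (intro divide_left_mono) auto
  moreover have "x/(2*s) = 1/(2*q)" using sx sp xp qp by (simp add: field_simps)
  ultimately have tlow: "1/(2*q) \<le> t" by simp
  have "2*m > t" using th0 m1 unfolding \<theta>_def by linarith
  hence "1/(4*q) < m" using tlow by linarith
  hence im: "1/m \<le> 4*q" using qp mp by (simp add: field_simps)
  have rho_eq: "\<rho> = \<theta>/m" unfolding \<rho>_def r_def \<theta>_def using mp by (simp add: field_simps)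
  have rho0: "0 \<le> \<rho>" unfolding rho_eq using th0 mp by simp
  have rho1: "\<rho> \<le> 1/m" unfolding rho_eq using th0 mp by (simp add: divide_right_mono)
  have rhoq: "\<rho> \<le> 4*q" using rho1 im by linarith
  have "1/m \<le> 1" using m1 by simp
  hence rho_le1: "\<rho> \<le> 1" using rho1 by linarith
  have r_eq: "r = 1 + \<rho>" unfolding \<rho>_def by simp
  have r1: "1 \<le> r" "r \<le> 2" using rho0 rho_le1 r_eq by auto
  have a0: "0 \<le> a" unfolding a_def using xp by simp
  have "k^2 \<le> (2*s)^2" using kp k2 by (intro power_mono) auto
  hence "a \<le> 4*s^2/x" unfolding a_def using xp by (simp add: divide_right_mono power_mult_distrib)
  also have "4*s^2/x = 4*D" using ss xp by simp
  finally have a4: "a \<le> 4*D" .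
  have alpha: "\<bar>a - D\<bar> \<le> 9*D*q"
  proof -
    have "a - D = (k - s)*(k+s)/x" unfolding a_def using ss xp by (simp add: field_simps power2_eq_square)
    hence "\<bar>a - D\<bar> = \<bar>k-s\<bar>*(k+s)/x" using kp sp xp by (simp add: abs_mult)
    also have "\<dots> \<le> (3*D)*(3*s)/x" using ks k2 kp sp xp
      by (intro divide_right_mono mult_mono) auto
    also have "\<dots> = 9*D*(s/x)" by simp
    finally show ?thesis using sx by simp
  qed
  have arD: "\<bar>a*r - D\<bar> \<le> 25*D*q"
  proof -
    have e: "a*r - D = a*\<rho> + (a - D)" unfolding r_eq by (simp add: algebra_simps)
    have "\<bar>a*\<rho>\<bar> = a*\<rho>" using a0 rho0 by simp
    hence "\<bar>a*r - D\<bar> \<le> a*\<rho> + \<bar>a - D\<bar>" unfolding e using abs_triangle_ineq[of "a*\<rho>" "a - D"] by linarith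
    moreover have "a*\<rho> \<le> (4*D)*(4*q)" using a4 rhoq a0 rho0 by (intro mult_mono) auto
    ultimately show ?thesis using alpha by simp
  qed
  have Q3: "0 \<le> r^3+r^2+r - 3" "r^3+r^2+r - 3 \<le> 11*\<rho>"
  proof -
    have e: "r^3+r^2+r - 3 = \<rho>*(r^2+2*r+3)" unfolding r_eq by (simp add: algebra_simps power2_eq_square power3_eq_cube)
    have "r^2 \<le> 2^2" using r1 by (intro power_mono) auto
    hence "r^2 \<le> 4" by simp
    hence "r^2+2*r+3 \<le> 11" using r1 by linarith
    moreover have "r^2+2*r+3 \<ge> 0" using r1 zero_le_power2[of r] by linarith
    ultimately show "0 \<le> r^3+r^2+r - 3" "r^3+r^2+r - 3 \<le> 11*\<rho>" unfolding e using rho0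
      by (auto intro: mult_left_mono simp: mult.commute)
  qed
  have a2: "a^2 \<le> 16*D^2"
  proof -
    have "a^2 \<le> (4*D)^2" using a0 a4 by (intro power_mono) auto
    thus ?thesis by (simp add: power_mult_distrib)
  qed
  have t1: "\<bar>a^2*(r^3+r^2+r - 3)\<bar> \<le> 704*(D^2*q)"
  proof -
    have "\<bar>a^2*(r^3+r^2+r - 3)\<bar> = a^2*(r^3+r^2+r - 3)" using Q3 by simp
    also have "\<dots> \<le> (16*D^2)*(11*(4*q))" using a2 Q3 rhoq
      by (intro mult_mono) auto
    finally show ?thesis by simp
  qed
  have t2: "\<bar>a^2 - D^2\<bar> \<le> 45*(D^2*q)"
  proof -
    have "a^2 - D^2 = (a - D)*(a+D)" by (simp add: power2_eq_square algebra_simps)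
    hence "\<bar>a^2 - D^2\<bar> = \<bar>a - D\<bar>*\<bar>a+D\<bar>" by (simp add: abs_mult)
    also have "\<bar>a+D\<bar> = a + D" using a0 Dp by simp
    finally have "\<bar>a^2 - D^2\<bar> = \<bar>a - D\<bar>*(a+D)" .
    also have "\<dots> \<le> (9*D*q)*(5*D)" using alpha a4 a0 Dp by (intro mult_mono) auto
    also have "(9*D*q)*(5*D) = 45*(D^2*q)" by (simp add: power2_eq_square)
    finally show ?thesis .
  qed
  have B1: "\<bar>B + 1\<bar> \<le> 330*(D^2*q)"
  proof -
    have e: "B + 1 = 2*d*(a*r - D) - (a^2*(r^3+r^2+r - 3) + 3*(a^2 - D^2))/3"
      unfolding B_def dD by (simp add: field_simps power2_eq_square)
    have "\<bar>2*d*(a*r - D)\<bar> \<le> 2*D*(25*D*q)"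
    proof -
      have "\<bar>2*d*(a*r - D)\<bar> = 2*d*\<bar>a*r - D\<bar>" using dD D2 by (simp add: abs_mult)
      also have "\<dots> \<le> 2*D*(25*D*q)" using arD dD D2 by (intro mult_mono) auto
      finally show ?thesis .
    qed
    hence "\<bar>2*d*(a*r - D)\<bar> \<le> 50*(D^2*q)" by (simp add: power2_eq_square)
    from absB[OF this t1 t2] have "\<bar>B + 1\<bar> \<le> 50*(D^2*q) + 704*(D^2*q)/3 + 45*(D^2*q)" unfolding e .
    moreover have "D^2*q \<ge> 0" using qp by simp
    ultimately show ?thesis by linarith
  qed
  have thB: "\<bar>\<theta>*B\<bar> \<le> 1 + 330*(D^2*q)"
  proof -
    have "\<bar>B\<bar> \<le> 1 + 330*(D^2*q)" using absB1[OF B1] .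
    hence "\<bar>\<theta>\<bar>*\<bar>B\<bar> \<le> 1*(1 + 330*(D^2*q))" using th0 by (intro mult_mono) auto
    thus ?thesis by (simp add: abs_mult)
  qed
  have eta: "\<bar>x^2*Fv - x^2/(3*m^3)\<bar> \<le> 342*(D^2*q)"
  proof -
    have "x^2*Fv \<le> x^2*(1/(3*m^3))" using Fu by (intro mult_left_mono) auto
    hence "\<bar>x^2*Fv - x^2/(3*m^3)\<bar> = x^2/(3*m^3) - x^2*Fv" by simp
    also have "\<dots> = x^2*(1/(3*m^3) - Fv)" by (simp add: algebra_simps)
    finally have "\<bar>x^2*Fv - x^2/(3*m^3)\<bar> = x^2*(1/(3*m^3) - Fv)" .
    also have "x^2*(1/(3*m^3) - Fv) \<le> x^2*(1/(3*m^5))" using Fl xp by (intro mult_left_mono) auto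
    also have "\<dots> = x^2*(1/m)^5/3" by (simp add: power_one_over)
    also have "\<dots> \<le> x^2*(4*q)^5/3" using im mp
      by (intro divide_right_mono mult_left_mono power_mono) auto
    also have "x^2*(4*q)^5/3 = (1024/3)*(D^2*q)"
    proof -
      have "x*q^2 = D" unfolding q_def xs using sp Dp by (simp add: field_simps power2_eq_square)
      have "x^2*q^5 = (x*q^2)^2*q" by (simp add: power_mult_distrib power2_eq_square power_def numeral_eq_Suc algebra_simps)
      hence "x^2*q^5 = D^2*q" using \<open>x*q^2 = D\<close> by simp
      thus ?thesis by (simp add: power_mult_distrib)
    qed
    also have "(1024/3)*(D^2*q) \<le> 342*(D^2*q)" using qp by (intro mult_right_mono) auto
    finally show ?thesis .
  qed
  have Gk: "\<bar>d^2*x/k + 2*d*k - k^3/(3*x) - s*(d^2/D + 2*d - D/3)\<bar> \<le> 3 + 36*(D^2*q)"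
  proof -
    have e: "d^2*x/k + 2*d*k - k^3/(3*x) - s*(d^2/D + 2*d - D/3)
       = -(k-s)/D + (k-s)^2*(d^2*x/(k*s^2) - (k+2*s)/(3*x))"
      by (rule ident2[OF xp kp sp Dp ss dD])
    have "\<bar>(k-s)/D\<bar> = \<bar>k-s\<bar>/D" unfolding abs_divide abs_of_pos[OF Dp] ..
    also have "\<dots> \<le> (3*D)/D" using ks Dp by (intro divide_right_mono) auto
    also have "\<dots> = 3" using Dp by simp
    finally have c1: "\<bar>(k-s)/D\<bar> \<le> 3" .
    have c2: "0 \<le> d^2*x/(k*s^2)" using xp kp by simp
    have "d^2*x/(k*s^2) = d^2*x/(k*(D*x))" unfolding ss ..
    also have "\<dots> = d^2/(D*k)" using xp by simp
    also have "\<dots> \<le> D^2/(D*k)" using dD D2 kp by (intro divide_right_mono power_mono) auto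
    also have "\<dots> = D/k" using Dp by (simp add: power2_eq_square)
    also have "\<dots> \<le> D/(s/4)" using k4 sp Dp by (intro divide_left_mono) auto
    also have "\<dots> = 4*q" unfolding q_def by simp
    finally have c3: "d^2*x/(k*s^2) \<le> 4*q" .
    have c4: "0 \<le> (k+2*s)/(3*x)" using kp sp xp by simp
    have "(k+2*s)/(3*x) \<le> (4*s)/(3*x)" using k2 xp by (intro divide_right_mono) auto
    also have "\<dots> = (4/3)*q" using sx by simp
    finally have c5: "(k+2*s)/(3*x) \<le> (4/3)*q" .
    have c6: "\<bar>d^2*x/(k*s^2) - (k+2*s)/(3*x)\<bar> \<le> 4*q" using qp by (intro absC[OF c2 c3 c4 c5]) auto
    have "\<bar>k-s\<bar>^2 \<le> (3*D)^2" using ks by (intro power_mono) auto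
    hence "(k-s)^2 \<le> (3*D)^2" by simp
    hence c7: "(k-s)^2 \<le> 9*D^2" by (simp add: power_mult_distrib)
    have "\<bar>(k-s)^2*(d^2*x/(k*s^2) - (k+2*s)/(3*x))\<bar> = (k-s)^2*\<bar>d^2*x/(k*s^2) - (k+2*s)/(3*x)\<bar>"
      by (simp add: abs_mult)
    also have "\<dots> \<le> (9*D^2)*(4*q)" using c7 c6 by (intro mult_mono) auto
    finally have c8: "\<bar>(k-s)^2*(d^2*x/(k*s^2) - (k+2*s)/(3*x))\<bar> \<le> 36*(D^2*q)" by simp
    have "\<bar>-((k-s)/D) + (k-s)^2*(d^2*x/(k*s^2) - (k+2*s)/(3*x))\<bar> \<le> 3 + 36*(D^2*q)" by (rule absD[OF c1 c8])
    thus ?thesis unfolding e by (simp only: minus_divide_left)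
  qed
  have id1: "d^2*m + 2*d*x/m - x^2/(3*m^3) - (d^2*x/k + 2*d*k - k^3/(3*x)) = \<theta>*B"
    unfolding \<theta>_def B_def t_def a_def r_def by (rule ident1[OF xp kp mp])
  have "\<bar>d^2*m + 2*d*x/m - x^2*Fv - s*(d^2/D + 2*d - D/3)\<bar> \<le> (1 + 330*(D^2*q)) + 342*(D^2*q) + (3 + 36*(D^2*q))"
    by (rule absE[OF id1 thB eta Gk])
  also have "\<dots> \<le> 4 + 720*(D^2*q)" using qp Dp by (simp add: algebra_simps)
  finally show ?thesis unfolding q_def .
qed



lemma geomR:
  fixes D x :: real
  assumes D2: "D \<ge> 2" and xD: "2*D \<le> x"
  defines "R \<equiv> (D + sqrt (D^2 + 4*D*x))/2"
  defines "s \<equiv> sqrt (D*x)"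
  shows "s > 0" "s^2 = D*x" "s \<le> R" "R \<le> s + D" "2*D \<le> R" "R \<le> x" "D \<le> s"
proof -
  have Dp: "D > 0" using D2 by simp
  have xp: "x > 0" using xD Dp by simp
  have "0 \<le> 4*D*x" using Dp xp by simp
  hence nn: "0 \<le> D^2 + 4*D*x" using zero_le_power2[of D] by linarith
  have sq: "(sqrt (D^2 + 4*D*x))^2 = D^2 + 4*D*x" using real_sqrt_pow2[OF nn] .
  have sq0: "sqrt (D^2 + 4*D*x) \<ge> 0" using nn by simp
  have RR: "R*(R - D) = D*x" unfolding R_def using sq by (simp add: field_simps power2_eq_square)
  have sqD: "sqrt (D^2 + 4*D*x) \<ge> D"
    using Dp xp by (intro real_le_rsqrt) simp
  have RD: "R \<ge> D" unfolding R_def using sqD by simp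
  show sp: "s > 0" unfolding s_def using Dp xp by simp
  show ss: "s^2 = D*x" unfolding s_def using Dp xp by simp
  have R2: "R^2 = R*(R-D) + D*R" by (simp add: power2_eq_square algebra_simps)
  have "D*R \<ge> 0" using Dp RD by simp
  hence "R^2 \<ge> s^2" using R2 RR ss by linarith
  moreover have "0 \<le> R" using RD Dp by linarith
  ultimately show sR: "s \<le> R" by (rule power2_le_imp_le)
  have "(R - s)*(R + s) = R^2 - s^2" by (simp add: algebra_simps power2_eq_square)
  hence "(R - s)*(R + s) = D*R" using R2 RR ss by linarith
  moreover have "D*R \<le> D*(R+s)" using Dp sp by simp
  ultimately have "(R - s)*(R+s) \<le> D*(R+s)" by simp
  moreover have "0 < R + s" using sp RD Dp by linarith
  ultimately have "R - s \<le> D" by (rule mult_right_le_imp_le)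
  thus "R \<le> s + D" by simp
  show "2*D \<le> R"
  proof (rule ccontr)
    assume "\<not> 2*D \<le> R"
    hence "R < 2*D" by simp
    have "R - D \<le> D" "0 \<le> R" using RD \<open>R < 2*D\<close> Dp by auto
    hence "R*(R-D) \<le> R*D" by (rule mult_left_mono)
    also have "R*D < (2*D)*D" using \<open>R < 2*D\<close> Dp by (rule mult_strict_right_mono)
    finally have "R*(R-D) < 2*D*D" by simp
    moreover have "(2*D)*D \<le> x*D" using xD by (rule mult_right_mono) (use Dp in simp)
    hence "2*D*D \<le> D*x" by (simp add: mult.commute)
    ultimately show False using RR by simp
  qed
  show "R \<le> x"
  proof (rule ccontr)
    assume "\<not> R \<le> x"
    hence "x < R" by simp
    have "x < R" "x - D < R - D" "0 < R" "0 \<le> x - D" using \<open>x < R\<close> xD Dp by auto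
    hence "x*(x - D) < R*(R-D)" by (rule mult_strict_mono)
    moreover have "x*D \<le> x*(x - D)" using xD xp by (intro mult_left_mono) auto
    ultimately show False using RR by (simp add: mult.commute)
  qed
  have "D*D \<le> D*x" using xD Dp by (intro mult_left_mono) auto
  hence "D^2 \<le> s^2" using ss by (simp add: power2_eq_square)
  moreover have "0 \<le> s" using sp by simp
  ultimately show "D \<le> s" by (rule power2_le_imp_le)
qed



lemma powr_bound:
  fixes d x D s :: real
  assumes d1: "d \<ge> 1" and xp: "x > 0" and DD: "D = d + 1" and sd: "s = sqrt (D*x)"
  shows "D*(720*(D^2*(D/s))) \<le> 8640 * d powr (7/2) * x powr (-1/2)"
proof -
  have Dp: "D > 0" using DD d1 by simp
  define rD where "rD = sqrt D"
  define rx where "rx = sqrt x"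
  have rDp: "rD > 0" unfolding rD_def using Dp by simp
  have rxp: "rx > 0" unfolding rx_def using xp by simp
  have Dr: "D = rD^2" unfolding rD_def using Dp by simp
  have s2: "s = rD * rx" unfolding sd rD_def rx_def by (simp add: real_sqrt_mult)
  have p1: "D powr (7/2) = D^3 * rD"
  proof -
    have "D powr (7/2) = D powr (3 + 1/2)" by simp
    also have "\<dots> = D powr 3 * D powr (1/2)" by (rule powr_add)
    also have "D powr 3 = D^3" using powr_realpow[OF Dp, of 3] by simp
    also have "D powr (1/2) = rD" unfolding rD_def using Dp by (simp add: powr_half_sqrt)
    finally show ?thesis .
  qed
  have p2: "x powr (-1/2) = 1/rx"
  proof -
    have "x powr (-1/2) = inverse (x powr (1/2))" using powr_minus[of x "1/2"] by simp
    also have "x powr (1/2) = rx" unfolding rx_def using xp by (simp add: powr_half_sqrt)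
    finally show ?thesis by (simp only: inverse_eq_divide)
  qed
  have e2: "D*(720*(D^2*(D/s))) = 720 * D powr (7/2) * x powr (-1/2)"
    using rDp rxp by (unfold p1 p2 s2, unfold Dr, simp add: field_simps power_def numeral_eq_Suc)
  have "D powr (7/2) \<le> (2*d) powr (7/2)" by (rule powr_mono2) (use DD d1 in auto)
  also have "(2*d) powr (7/2) = 2 powr (7/2) * d powr (7/2)" using d1 by (simp add: powr_mult)
  also have "2 powr (7/2) \<le> (12::real)"
  proof -
    have "(2::real) powr (7/2) = 2 powr (3 + 1/2)" by simp
    also have "\<dots> = 2 powr 3 * 2 powr (1/2)" by (rule powr_add)
    also have "(2::real) powr 3 = 8" using powr_realpow[of "2::real" 3] by simp
    also have "(2::real) powr (1/2) = sqrt 2" by (simp add: powr_half_sqrt)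
    also have "sqrt 2 \<le> sqrt (9/4)" by simp
    hence "8 * sqrt 2 \<le> 8 * sqrt (9/4)" by simp
    also have "sqrt (9/4) = (3/2::real)"
      by (simp add: real_sqrt_divide) 
    finally show ?thesis by simp
  qed
  hence "2 powr (7/2) * d powr (7/2) \<le> 12 * d powr (7/2)" by (rule mult_right_mono) auto
  finally have "D powr (7/2) \<le> 12 * d powr (7/2)" .
  hence "720 * D powr (7/2) \<le> 720 * (12 * d powr (7/2))" by simp
  hence "720 * D powr (7/2) * x powr (-1/2) \<le> 720 * (12 * d powr (7/2)) * x powr (-1/2)"
    by (rule mult_right_mono) simp
  thus ?thesis unfolding e2 by simp
qed



theorem proposition8:
  shows "\<exists>C1 C2. \<forall>(d::nat) (x::real). d \<ge> 1 \<longrightarrow> real d + 1 \<le> x / 2 \<longrightarrow>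
    \<bar>(\<Sum>k\<in>{K (d+1) x - int d - 1 <.. K (d+1) x}.
        (real d)^2 * of_int \<lfloor>x / of_int k\<rfloor>
        + 2 * real d * x / of_int \<lfloor>x / of_int k\<rfloor>
        - x^2 * F (x / of_int k))
     - (8 * (real d)^2 + 4 * real d - 1) / 3 * sqrt ((real d + 1) * x)\<bar>
    \<le> C1 * real d powr (7/2) * x powr (-1/2) + C2 * (real d)^2"
proof (intro exI allI impI)
  fix d :: nat and x :: real
  assume d1: "d \<ge> 1" and dx: "real d + 1 \<le> x / 2"
  define D where "D = real d + 1"
  define s where "s = sqrt (D*x)"
  define R where "R = (D + sqrt (D^2 + 4*D*x))/2"
  define KK where "KK = K (d+1) x"
  define Gs where "Gs = s*((real d)^2/D + 2*real d - D/3)"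
  define S where "S = {KK - int d - 1 <.. KK}"
  define T where "T = (\<lambda>k::int. (real d)^2 * of_int \<lfloor>x / of_int k\<rfloor>
        + 2 * real d * x / of_int \<lfloor>x / of_int k\<rfloor> - x^2 * F (x / of_int k))"
  have D2: "D \<ge> 2" unfolding D_def using d1 by simp
  have xD: "2*D \<le> x" unfolding D_def using dx by simp
  have Dp: "D > 0" using D2 by simp
  have xp: "x > 0" using xD Dp by simp
  note g = geomR[OF D2 xD, folded R_def s_def]
  have sp: "s > 0" and ss: "s^2 = D*x" and sR: "s \<le> R" and Rs: "R \<le> s + D" and R2D: "2*D \<le> R"
    and Rx: "R \<le> x" and Ds: "D \<le> s" using g by auto
  have KKR: "KK = \<lfloor>R\<rfloor>" unfolding KK_def K_def R_def D_def by (simp only: of_nat_add of_nat_1)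
  have each: "\<bar>T k - Gs\<bar> \<le> 4 + 720*(D^2*(D/s))" if kS: "k \<in> S" for k
  proof -
    have k1: "k \<le> KK" "KK - int d - 1 < k" using kS unfolding S_def by auto
    have kR: "real_of_int k \<le> R" using k1(1) unfolding KKR by linarith
    have "real_of_int k \<ge> of_int KK - real d" using k1(2) by linarith
    moreover have "of_int KK > R - 1" unfolding KKR by linarith
    ultimately have kR2: "real_of_int k > R - D" unfolding D_def by linarith
    have kp: "real_of_int k > 0" using kR2 R2D Dp by linarith
    have k4: "s/4 \<le> real_of_int k" using kR2 R2D sR Dp by linarith
    have k2: "real_of_int k \<le> 2*s" using kR Rs Ds by linarith
    have ks: "\<bar>real_of_int k - s\<bar> \<le> 3*D" using kR kR2 Rs sR Dp by linarith
    have t1: "x / real_of_int k \<ge> 1" using kp kR Rx by (simp add: le_divide_eq)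
    have m1: "real_of_int \<lfloor>x / real_of_int k\<rfloor> \<ge> 1" using t1 by simp
    have mt1: "real_of_int \<lfloor>x / real_of_int k\<rfloor> \<le> x / real_of_int k" by (rule of_int_floor_le)
    have mt2: "x / real_of_int k < real_of_int \<lfloor>x / real_of_int k\<rfloor> + 1" by (rule real_of_int_floor_add_one_gt)
    have FB: "1/(3*(real_of_int \<lfloor>x / real_of_int k\<rfloor>)^3) - 1/(3*(real_of_int \<lfloor>x / real_of_int k\<rfloor>)^5) \<le> F (x / real_of_int k)"
      "F (x / real_of_int k) \<le> 1/(3*(real_of_int \<lfloor>x / real_of_int k\<rfloor>)^3)"
      using F_bounds[OF t1] by auto
    have dD: "real d = D - 1" unfolding D_def by simp
    from term_bound[OF D2 dD xp sp ss k4 k2 ks m1 mt1 mt2 FB(1) FB(2)]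
    show ?thesis unfolding T_def Gs_def .
  qed
  have cardS: "card S = d + 1" unfolding S_def by simp
  have finS: "finite S" unfolding S_def by simp
  have "\<bar>(\<Sum>k\<in>S. T k) - (\<Sum>k\<in>S. Gs)\<bar> = \<bar>\<Sum>k\<in>S. (T k - Gs)\<bar>" by (simp add: sum_subtractf)
  also have "\<dots> \<le> (\<Sum>k\<in>S. \<bar>T k - Gs\<bar>)" by (rule sum_abs)
  also have "\<dots> \<le> (\<Sum>k\<in>S. 4 + 720*(D^2*(D/s)))" by (rule sum_mono) (rule each)
  also have "\<dots> = D * (4 + 720*(D^2*(D/s)))" using cardS unfolding D_def by simp
  finally have bound: "\<bar>(\<Sum>k\<in>S. T k) - (\<Sum>k\<in>S. Gs)\<bar> \<le> D * (4 + 720*(D^2*(D/s)))" .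
  have mainterm: "(\<Sum>k\<in>S. Gs) = (8 * (real d)^2 + 4 * real d - 1) / 3 * sqrt ((real d + 1) * x)"
  proof -
    have "(\<Sum>k\<in>S. Gs) = D * Gs" using cardS unfolding D_def by simp
    also have "\<dots> = (8 * (real d)^2 + 4 * real d - 1) / 3 * s"
      unfolding Gs_def D_def by (simp add: field_simps power2_eq_square)
    finally show ?thesis unfolding s_def D_def .
  qed
  have pb: "D*(720*(D^2*(D/s))) \<le> 8640 * real d powr (7/2) * x powr (-1/2)"
    by (rule powr_bound) (use d1 xp in \<open>auto simp: D_def s_def\<close>)
  have "D*4 \<le> 8 * (real d)^2"
  proof -
    have "real d * 1 \<le> real d * real d" using d1 by (intro mult_left_mono) auto
    hence "real d \<le> (real d)^2" by (simp add: power2_eq_square)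
    moreover have "1 \<le> real d" using d1 by simp
    moreover have "(real d + 1)*4 = 4*real d + 4" by simp
    ultimately show ?thesis unfolding D_def by linarith
  qed
  hence "D * (4 + 720*(D^2*(D/s))) \<le> 8640 * real d powr (7/2) * x powr (-1/2) + 8 * (real d)^2"
    using pb by (simp add: distrib_left)
  with bound mainterm show "\<bar>(\<Sum>k\<in>{K (d+1) x - int d - 1 <.. K (d+1) x}.
        (real d)^2 * of_int \<lfloor>x / of_int k\<rfloor>
        + 2 * real d * x / of_int \<lfloor>x / of_int k\<rfloor>
        - x^2 * F (x / of_int k))
     - (8 * (real d)^2 + 4 * real d - 1) / 3 * sqrt ((real d + 1) * x)\<bar>
    \<le> 8640 * real d powr (7/2) * x powr (-1/2) + 8 * (real d)^2"
    unfolding S_def T_def KK_def by simp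
qed


end
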